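(* Let $\mathcal G=(V_{\min},V_{\max},E,w,\lambda)$ be a discounted payoff game and $\{\alpha_e>0\mid e\in E\}$ positive numbers such that $\mathcal G$ is improving with respect to the adjusted objectives $f'_\sigma$. Let $\sigma$ be a joint strategy and $\nu$ a basis valuation of $H$ minimising $f'_\sigma$ over all solutions of $H$, with $f'_\sigma(\nu)\neq0$, and assume there are no local improvements of $\sigma$ for $\nu$, i.e. $\mathsf{offset}'(\nu,(v,v'))\ge\mathsf{offset}'(\nu,(v,\sigma(v)))$ for all $(v,v')\in E$. Let $E'$ be a given set of edges with $E_\nu\subseteq E'\subseteq S^\sigma_\nu$ containing an outgoing edge of every vertex. Then there exist a neighbouring valuation $\nu''$ of $\nu$ and a joint strategy $\sigma'$ with $f'_{\sigma'}(\nu'')<f'_\sigma(\nu)$; such a $\sigma'$ is better than $\sigma$ (with respect to the adjusted objectives), and it can be chosen such that $(v,\sigma'(v))\in E'$ for all $v\in V$.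
   Context: A discounted payoff game is a tuple $\mathcal G=(V_{\min},V_{\max},E,w,\lambda)$ with $V=V_{\min}\cup V_{\max}$ finite (disjoint union of Min and Max vertices), $E\subseteq V\times V$ with every vertex having an outgoing edge, $w:E\to\mathbb R$, $\lambda:E\to[0,1)$. A joint strategy is a map $\sigma:V\to V$ with $(v,\sigma(v))\in E$. $H$ is the system of inequations over $x\in\mathbb R^V$ containing, for each edge $e=(v,v')$, $x(v)\ge w_e+\lambda_e x(v')$ if $v\in V_{\max}$ and $x(v)\le w_e+\lambda_e x(v')$ if $v\in V_{\min}$. A basis of $H$ is a set of $|V|$ inequations of $H$ whose equality versions have a unique common solution; if it satisfies $H$ it is the basis valuation of that basis. $\mathsf{offset}(x,(v,v'))=x(v)-(w_{(v,v')}+\lambda_{(v,v')}x(v'))$ if $v\in V_{\max}$, and $(w_{(v,v')}+\lambda_{(v,v')}x(v'))-x(v)$ otherwise; the adjusted offset is $\mathsf{offset}'(x,e)=\alpha_e\,\mathsf{offset}(x,e)$ and the adjusted objective is $f'_\sigma(x)=\sum_{v\in V}\mathsf{offset}'(x,(v,\sigma(v)))$. $S^\sigma_\nu=\{(v,v')\in E\mid\mathsf{offset}'(\nu,(v,v'))=\mathsf{offset}'(\nu,(v,\sigma(v)))\}$ and $E_\nu=\{(v,v')\in E\mid\mathsf{offset}(\nu,(v,v'))=0\}$. $\sigma'$ is better than $\sigma$ iff $\min\{f'_{\sigma'}(x)\mid x\text{ solves }H\}<\min\{f'_\sigma(x)\mid x\text{ solves }H\}$. The game is sharp if every basis valuation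 satisfies exactly $|V|$ inequations of $H$ with equality. A sharp game is improving (with respect to $f'$) if for every joint strategy $\sigma$ and every basis valuation $\nu$ not minimising $f'_\sigma$ over the solutions of $H$, there is a basis obtained from the basis of $\nu$ by exchanging exactly one inequation whose basis valuation $\nu'$ satisfies $f'_\sigma(\nu')<f'_\sigma(\nu)$. A neighbouring valuation of $\nu$ is the basis valuation of a basis obtained from the basis of $\nu$ by exchanging exactly one inequation. *)

theory Defs
  imports Complex_Main
begin

text \<open>The vertex set V is the (finite) universe of the
  vertex type 'v; the Min and Max vertices partition it.\<close>

record 'v dpg =
  vmin :: "'v set"
  vmax :: "'v set"
  edges :: "('v \<times> 'v) set"
  wt :: "'v \<times> 'v \<Rightarrow> real"
  disc :: "'v \<times> 'v \<Rightarrow> real"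

definition is_dpg :: "('v::finite) dpg \<Rightarrow> bool" where
  "is_dpg G \<longleftrightarrow> vmin G \<inter> vmax G = {} \<and> vmin G \<union> vmax G = UNIV
     \<and> (\<forall>v. \<exists>v'. (v, v') \<in> edges G)
     \<and> (\<forall>e \<in> edges G. 0 \<le> disc G e \<and> disc G e < 1)"

definition joint_strategy :: "'v dpg \<Rightarrow> ('v \<Rightarrow> 'v) \<Rightarrow> bool" where
  "joint_strategy G \<sigma> \<longleftrightarrow> (\<forall>v. (v, \<sigma> v) \<in> edges G)"

definition eq_holds :: "'v dpg \<Rightarrow> ('v \<times> 'v) \<Rightarrow> ('v \<Rightarrow> real) \<Rightarrow> bool" where
  "eq_holds G e x \<longleftrightarrow> x (fst e) = wt G e + disc G e * x (snd e)"

definition ineq_holds :: "'v dpg \<Rightarrow> ('v \<times> 'v) \<Rightarrow> ('v \<Rightarrow> real) \<Rightarrow> bool" where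
  "ineq_holds G e x \<longleftrightarrow>
     (if fst e \<in> vmax G then x (fst e) \<ge> wt G e + disc G e * x (snd e)
      else x (fst e) \<le> wt G e + disc G e * x (snd e))"

definition solves_H :: "'v dpg \<Rightarrow> ('v \<Rightarrow> real) \<Rightarrow> bool" where
  "solves_H G x \<longleftrightarrow> (\<forall>e \<in> edges G. ineq_holds G e x)"

definition is_basis :: "('v::finite) dpg \<Rightarrow> ('v \<times> 'v) set \<Rightarrow> bool" where
  "is_basis G B \<longleftrightarrow> B \<subseteq> edges G \<and> card B = card (UNIV :: 'v set)
     \<and> (\<exists>!x. \<forall>e \<in> B. eq_holds G e x)"

definition basis_val :: "('v::finite) dpg \<Rightarrow> ('v \<times> 'v) set \<Rightarrow> ('v \<Rightarrow> real) \<Rightarrow> bool" where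
  "basis_val G B x \<longleftrightarrow> is_basis G B \<and> (\<forall>e \<in> B. eq_holds G e x) \<and> solves_H G x"

definition is_basis_valuation :: "('v::finite) dpg \<Rightarrow> ('v \<Rightarrow> real) \<Rightarrow> bool" where
  "is_basis_valuation G x \<longleftrightarrow> (\<exists>B. basis_val G B x)"

definition offset :: "'v dpg \<Rightarrow> ('v \<Rightarrow> real) \<Rightarrow> ('v \<times> 'v) \<Rightarrow> real" where
  "offset G x e =
     (if fst e \<in> vmax G then x (fst e) - (wt G e + disc G e * x (snd e))
      else (wt G e + disc G e * x (snd e)) - x (fst e))"

definition offset' :: "'v dpg \<Rightarrow> ('v \<times> 'v \<Rightarrow> real) \<Rightarrow> ('v \<Rightarrow> real) \<Rightarrow> ('v \<times> 'v) \<Rightarrow> real" where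
  "offset' G \<alpha> x e = \<alpha> e * offset G x e"

definition f' :: "('v::finite) dpg \<Rightarrow> ('v \<times> 'v \<Rightarrow> real) \<Rightarrow> ('v \<Rightarrow> 'v) \<Rightarrow> ('v \<Rightarrow> real) \<Rightarrow> real" where
  "f' G \<alpha> \<sigma> x = (\<Sum>v\<in>UNIV. offset' G \<alpha> x (v, \<sigma> v))"

definition S_set :: "'v dpg \<Rightarrow> ('v \<times> 'v \<Rightarrow> real) \<Rightarrow> ('v \<Rightarrow> 'v) \<Rightarrow> ('v \<Rightarrow> real) \<Rightarrow> ('v \<times> 'v) set" where
  "S_set G \<alpha> \<sigma> \<nu> = {(v, v') \<in> edges G. offset' G \<alpha> \<nu> (v, v') = offset' G \<alpha> \<nu> (v, \<sigma> v)}"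

definition E_tight :: "'v dpg \<Rightarrow> ('v \<Rightarrow> real) \<Rightarrow> ('v \<times> 'v) set" where
  "E_tight G \<nu> = {e \<in> edges G. offset G \<nu> e = 0}"

definition minimises :: "('v::finite) dpg \<Rightarrow> ('v \<times> 'v \<Rightarrow> real) \<Rightarrow> ('v \<Rightarrow> 'v) \<Rightarrow> ('v \<Rightarrow> real) \<Rightarrow> bool" where
  "minimises G \<alpha> \<sigma> x \<longleftrightarrow> solves_H G x \<and> (\<forall>y. solves_H G y \<longrightarrow> f' G \<alpha> \<sigma> x \<le> f' G \<alpha> \<sigma> y)"

text \<open>min { f'_sigma(x) | x solves H }, rendered as the infimum.\<close>
definition min_f' :: "('v::finite) dpg \<Rightarrow> ('v \<times> 'v \<Rightarrow> real) \<Rightarrow> ('v \<Rightarrow> 'v) \<Rightarrow> real" where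
  "min_f' G \<alpha> \<sigma> = Inf {f' G \<alpha> \<sigma> x | x. solves_H G x}"

definition better :: "('v::finite) dpg \<Rightarrow> ('v \<times> 'v \<Rightarrow> real) \<Rightarrow> ('v \<Rightarrow> 'v) \<Rightarrow> ('v \<Rightarrow> 'v) \<Rightarrow> bool" where
  "better G \<alpha> \<sigma>' \<sigma> \<longleftrightarrow> min_f' G \<alpha> \<sigma>' < min_f' G \<alpha> \<sigma>"

definition sharp :: "('v::finite) dpg \<Rightarrow> bool" where
  "sharp G \<longleftrightarrow> (\<forall>x. is_basis_valuation G x \<longrightarrow> card {e \<in> edges G. eq_holds G e x} = card (UNIV :: 'v set))"

definition neighbouring :: "('v::finite) dpg \<Rightarrow> ('v \<Rightarrow> real) \<Rightarrow> ('v \<Rightarrow> real) \<Rightarrow> bool" where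
  "neighbouring G \<nu> \<nu>'' \<longleftrightarrow> (\<exists>B e e'. basis_val G B \<nu> \<and> e \<in> B \<and> e' \<in> edges G \<and> e' \<notin> B
      \<and> basis_val G (insert e' (B - {e})) \<nu>'')"

definition improving :: "('v::finite) dpg \<Rightarrow> ('v \<times> 'v \<Rightarrow> real) \<Rightarrow> bool" where
  "improving G \<alpha> \<longleftrightarrow> sharp G \<and>
     (\<forall>\<sigma> \<nu>. joint_strategy G \<sigma> \<and> is_basis_valuation G \<nu> \<and> \<not> minimises G \<alpha> \<sigma> \<nu>
        \<longrightarrow> (\<exists>\<nu>''. neighbouring G \<nu> \<nu>'' \<and> f' G \<alpha> \<sigma> \<nu>'' < f' G \<alpha> \<sigma> \<nu>))"

end

theory Submission
  imports Defs "HOL-Analysis.Analysis"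
begin

definition valE :: "'v dpg \<Rightarrow> ('v \<Rightarrow> real) \<Rightarrow> 'v \<times> 'v \<Rightarrow> real" where
  "valE G x e = wt G e + disc G e * x (snd e)"

definition PhiD :: "'v dpg \<Rightarrow> ('v \<times> 'v) set \<Rightarrow> ('v \<Rightarrow> real) \<Rightarrow> 'v \<Rightarrow> real" where
  "PhiD G D x v = (if v \<in> vmax G then Max (valE G x ` {e\<in>D. fst e = v})
                   else Min (valE G x ` {e\<in>D. fst e = v}))"

definition dd :: "('v::finite \<Rightarrow> real) \<Rightarrow> ('v \<Rightarrow> real) \<Rightarrow> real" where
  "dd x y = Max (range (\<lambda>u. \<bar>x u - y u\<bar>))"

lemma dd_ge: "\<bar>x u - y u\<bar> \<le> dd x y"
  unfolding dd_def by (rule Max_ge) auto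

lemma dd_nonneg: "0 \<le> dd x y"
  using dd_ge[of x undefined y] by linarith

lemma dd_attained: "\<exists>u. dd x y = \<bar>x u - y u\<bar>"
proof -
  have "dd x y \<in> range (\<lambda>u. \<bar>x u - y u\<bar>)" unfolding dd_def by (rule Max_in) auto
  then show ?thesis by auto
qed

lemma dd_le_sum: "dd x y \<le> (\<Sum>u\<in>UNIV. \<bar>x u - y u\<bar>)"
proof -
  obtain u where "dd x y = \<bar>x u - y u\<bar>" using dd_attained by blast
  also have "\<dots> \<le> (\<Sum>u\<in>UNIV. \<bar>x u - y u\<bar>)" by (rule member_le_sum) auto
  finally show ?thesis .
qed

lemma Max_diff:
  fixes f g :: "'a \<Rightarrow> real"
  assumes "finite A" "A \<noteq> {}" "\<And>a. a\<in>A \<Longrightarrow> \<bar>f a - g a\<bar> \<le> K"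
  shows "\<bar>Max (f`A) - Max (g`A)\<bar> \<le> K"
proof -
  have "Max (f`A) \<in> f`A" using assms by (intro Max_in) auto
  then obtain a where a: "a\<in>A" "Max (f`A) = f a" by auto
  have "Max (g`A) \<in> g`A" using assms by (intro Max_in) auto
  then obtain b where b: "b\<in>A" "Max (g`A) = g b" by auto
  have "g a \<le> Max (g`A)" using a assms by (intro Max_ge) auto
  moreover have "f b \<le> Max (f`A)" using b assms by (intro Max_ge) auto
  ultimately show ?thesis using assms(3)[OF a(1)] assms(3)[OF b(1)] a b by (simp add: abs_le_iff)
qed

lemma Min_diff:
  fixes f g :: "'a \<Rightarrow> real"
  assumes "finite A" "A \<noteq> {}" "\<And>a. a\<in>A \<Longrightarrow> \<bar>f a - g a\<bar> \<le> K"
  shows "\<bar>Min (f`A) - Min (g`A)\<bar> \<le> K"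
proof -
  have "Min (f`A) \<in> f`A" using assms by (intro Min_in) auto
  then obtain a where a: "a\<in>A" "Min (f`A) = f a" by auto
  have "Min (g`A) \<in> g`A" using assms by (intro Min_in) auto
  then obtain b where b: "b\<in>A" "Min (g`A) = g b" by auto
  have "Min (g`A) \<le> g a" using a assms by (intro Min_le) auto
  moreover have "Min (f`A) \<le> f b" using b assms by (intro Min_le) auto
  ultimately show ?thesis using assms(3)[OF a(1)] assms(3)[OF b(1)] a b by (simp add: abs_le_iff)
qed

lemma contraction:
  fixes G :: "('v::finite) dpg"
  assumes cb: "\<forall>e\<in>D. 0 \<le> disc G e \<and> disc G e \<le> c" and tot: "\<forall>v. \<exists>v'. (v,v') \<in> D" and c0: "0 \<le> c"
  shows "\<bar>PhiD G D x v - PhiD G D y v\<bar> \<le> c * dd x y"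
proof -
  let ?A = "{e\<in>D. fst e = v}"
  have fin: "finite ?A" by simp
  have ne: "?A \<noteq> {}" using tot by force
  have b: "\<bar>valE G x e - valE G y e\<bar> \<le> c * dd x y" if "e \<in> ?A" for e
  proof -
    have d: "0 \<le> disc G e" "disc G e \<le> c" using cb that by auto
    have "valE G x e - valE G y e = disc G e * (x (snd e) - y (snd e))"
      by (simp add: valE_def algebra_simps)
    then have "\<bar>valE G x e - valE G y e\<bar> = disc G e * \<bar>x (snd e) - y (snd e)\<bar>"
      using d by (simp add: abs_mult)
    also have "\<dots> \<le> c * dd x y" using d c0 by (intro mult_mono dd_ge) auto
    finally show ?thesis .
  qed
  show ?thesis
  proof (cases "v \<in> vmax G")
    case True
    then show ?thesis unfolding PhiD_def using Max_diff[OF fin ne b] by simp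
  next
    case False
    then show ?thesis unfolding PhiD_def using Min_diff[OF fin ne b] by simp
  qed
qed

lemma dd_Phi:
  fixes G :: "('v::finite) dpg"
  assumes cb: "\<forall>e\<in>D. 0 \<le> disc G e \<and> disc G e \<le> c" and tot: "\<forall>v. \<exists>v'. (v,v') \<in> D" and c0: "0 \<le> c"
  shows "dd (PhiD G D x) (PhiD G D y) \<le> c * dd x y"
proof -
  obtain u where "dd (PhiD G D x) (PhiD G D y) = \<bar>PhiD G D x u - PhiD G D y u\<bar>" using dd_attained by blast
  also have "\<dots> \<le> c * dd x y" by (rule contraction[OF assms])
  finally show ?thesis .
qed

lemma fixpoint_exists:
  fixes G :: "('v::finite) dpg"
  assumes db: "\<forall>e\<in>D. 0 \<le> disc G e \<and> disc G e < 1" and tot: "\<forall>v. \<exists>v'. (v,v') \<in> D"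
  shows "\<exists>L. PhiD G D L = L"
proof -
  define c where "c = Max (disc G ` D)"
  have Dne: "D \<noteq> {}" using tot by auto
  have c_in: "c \<in> disc G ` D" unfolding c_def using Dne by (intro Max_in) auto
  have c0: "0 \<le> c" "c < 1" using c_in db by auto
  have cb: "\<forall>e\<in>D. 0 \<le> disc G e \<and> disc G e \<le> c" using db by (auto simp: c_def)
  define s where "s k = (PhiD G D ^^ k) (\<lambda>_. 0)" for k
  have sS: "s (Suc k) = PhiD G D (s k)" for k by (simp add: s_def)
  define K where "K = dd (s 1) (s 0)"
  have step: "dd (s (Suc k)) (s k) \<le> c^k * K" for k
  proof (induction k)
    case 0 show ?case by (simp add: K_def)
  next
    case (Suc k)
    have "dd (s (Suc (Suc k))) (s (Suc k)) \<le> c * dd (s (Suc k)) (s k)"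
      unfolding sS by (rule dd_Phi[OF cb tot c0(1)])
    also have "\<dots> \<le> c * (c^k*K)" using Suc.IH c0 by (simp add: mult_left_mono)
    finally show ?case by (simp add: mult.assoc)
  qed
  have conv: "\<exists>l. (\<lambda>n. s n u) \<longlonglongrightarrow> l" for u
  proof -
    let ?d = "\<lambda>k. s (Suc k) u - s k u"
    have "summable (\<lambda>k. K * c^k)" using c0 by (intro summable_mult summable_geometric) simp
    moreover have "norm (?d k) \<le> K * c^k" for k
      using dd_ge[of "s (Suc k)" u "s k"] step[of k] by (simp add: mult.commute)
    ultimately have "summable ?d" by (rule summable_comparison_test'[where N=0])
    then have "(\<lambda>n. \<Sum>i<n. ?d i) \<longlonglongrightarrow> suminf ?d" by (rule summable_LIMSEQ)
    moreover have "(\<Sum>i<n. ?d i) = s n u - s 0 u" for n by (rule sum_lessThan_telescope)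
    ultimately have "(\<lambda>n. s n u - s 0 u) \<longlonglongrightarrow> suminf ?d" by simp
    then have "(\<lambda>n. s n u - s 0 u + s 0 u) \<longlonglongrightarrow> suminf ?d + s 0 u" by (intro tendsto_add) auto
    then show ?thesis by auto
  qed
  then obtain L where L: "\<And>u. (\<lambda>n. s n u) \<longlonglongrightarrow> L u" by metis
  have "PhiD G D L v = L v" for v
  proof -
    have 1: "(\<lambda>n. PhiD G D (s n) v) \<longlonglongrightarrow> L v" using LIMSEQ_Suc[OF L[of v]] by (simp add: sS)
    have "(\<lambda>n. (\<Sum>u\<in>UNIV. \<bar>s n u - L u\<bar>)) \<longlonglongrightarrow> (\<Sum>u\<in>UNIV. \<bar>L u - L u\<bar>)"
      by (intro tendsto_intros L)
    then have 2: "(\<lambda>n. (\<Sum>u\<in>UNIV. \<bar>s n u - L u\<bar>)) \<longlonglongrightarrow> 0" by simp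
    have 3: "norm (PhiD G D (s n) v - PhiD G D L v) \<le> (\<Sum>u\<in>UNIV. \<bar>s n u - L u\<bar>)" for n
    proof -
      have "\<bar>PhiD G D (s n) v - PhiD G D L v\<bar> \<le> c * dd (s n) L"
        by (rule contraction[OF cb tot c0(1)])
      also have "\<dots> \<le> dd (s n) L" using c0 dd_nonneg by (intro mult_left_le_one_le) auto
      also have "\<dots> \<le> (\<Sum>u\<in>UNIV. \<bar>s n u - L u\<bar>)" by (rule dd_le_sum)
      finally show ?thesis by simp
    qed
    have "(\<lambda>n. PhiD G D (s n) v - PhiD G D L v) \<longlonglongrightarrow> 0"
      by (rule Lim_null_comparison[OF _ 2]) (use 3 in auto)
    then have "(\<lambda>n. PhiD G D (s n) v) \<longlonglongrightarrow> PhiD G D L v" by (rule LIM_zero_cancel)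
    from LIMSEQ_unique[OF this 1] show ?thesis .
  qed
  then show ?thesis by blast
qed

lemma equilibrium:
  fixes G :: "('v::finite) dpg"
  assumes db: "\<forall>e\<in>D. 0 \<le> disc G e \<and> disc G e < 1" and tot: "\<forall>v. \<exists>v'. (v,v') \<in> D"
  shows "\<exists>\<sigma>' z. (\<forall>v. (v, \<sigma>' v) \<in> D \<and> offset G z (v, \<sigma>' v) = 0) \<and> (\<forall>e\<in>D. offset G z e \<ge> 0)"
proof -
  obtain L where L: "PhiD G D L = L" using fixpoint_exists[OF db tot] by blast
  have "\<exists>e. e \<in> D \<and> fst e = v \<and> valE G L e = L v" for v
  proof -
    let ?A = "{e\<in>D. fst e = v}"
    have fin: "finite ?A" by simp
    have ne: "?A \<noteq> {}" using tot by force
    have "PhiD G D L v \<in> valE G L ` ?A"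
      unfolding PhiD_def using fin ne by (auto intro!: Max_in Min_in)
    then show ?thesis using L by (metis (mono_tags, lifting) image_iff mem_Collect_eq)
  qed
  then obtain sel where sel: "\<And>v. sel v \<in> D \<and> fst (sel v) = v \<and> valE G L (sel v) = L v" by metis
  define \<sigma>' where "\<sigma>' v = snd (sel v)" for v
  have selv: "sel v = (v, \<sigma>' v)" for v by (metis \<sigma>'_def prod.collapse sel)
  have A: "(v, \<sigma>' v) \<in> D \<and> offset G L (v, \<sigma>' v) = 0" for v
    using sel[of v] unfolding selv by (auto simp: offset_def valE_def)
  have B: "offset G L e \<ge> 0" if "e \<in> D" for e
  proof -
    obtain v v' where e: "e = (v, v')" by fastforce
    let ?A = "{e\<in>D. fst e = v}"
    have fin: "finite ?A" by simp
    have eA: "e \<in> ?A" using that e by auto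
    have Lv: "L v = PhiD G D L v" using L by simp
    show ?thesis
    proof (cases "v \<in> vmax G")
      case True
      have "valE G L e \<le> Max (valE G L ` ?A)" using fin eA by (intro Max_ge) auto
      then show ?thesis using True Lv unfolding PhiD_def offset_def valE_def e by simp
    next
      case False
      have "Min (valE G L ` ?A) \<le> valE G L e" using fin eA by (intro Min_le) auto
      then show ?thesis using False Lv unfolding PhiD_def offset_def valE_def e by simp
    qed
  qed
  show ?thesis using A B by blast
qed

lemma offset_affine:
  "offset G (\<lambda>u. (1-t) * x u + t * z u) e = (1-t) * offset G x e + t * offset G z e"
  unfolding offset_def by (simp add: algebra_simps)

lemma f'_affine:
  "f' G \<alpha> \<tau> (\<lambda>u. (1-t) * x u + t * z u) = (1-t) * f' G \<alpha> \<tau> x + t * f' G \<alpha> \<tau> z"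
proof -
  have "f' G \<alpha> \<tau> (\<lambda>u. (1-t) * x u + t * z u) = (\<Sum>v\<in>UNIV. (1-t) * offset' G \<alpha> x (v, \<tau> v) + t * offset' G \<alpha> z (v, \<tau> v))"
    unfolding f'_def offset'_def offset_affine by (intro sum.cong) (auto simp: algebra_simps)
  also have "\<dots> = (1-t) * f' G \<alpha> \<tau> x + t * f' G \<alpha> \<tau> z"
    unfolding f'_def by (simp add: sum.distrib sum_distrib_left)
  finally show ?thesis .
qed

lemma ineq_offset: "ineq_holds G e x \<longleftrightarrow> offset G x e \<ge> 0"
  unfolding ineq_holds_def offset_def by auto

theorem theorem4p8:
  fixes G :: "('v::finite) dpg" and \<alpha> :: "'v \<times> 'v \<Rightarrow> real"
    and \<sigma> :: "'v \<Rightarrow> 'v" and \<nu> :: "'v \<Rightarrow> real" and E' :: "('v \<times> 'v) set"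
  assumes "is_dpg G"
    and "\<forall>e \<in> edges G. \<alpha> e > 0"
    and "improving G \<alpha>"
    and "joint_strategy G \<sigma>"
    and "is_basis_valuation G \<nu>"
    and "minimises G \<alpha> \<sigma> \<nu>"
    and "f' G \<alpha> \<sigma> \<nu> \<noteq> 0"
    and "\<forall>(v, v') \<in> edges G. offset' G \<alpha> \<nu> (v, v') \<ge> offset' G \<alpha> \<nu> (v, \<sigma> v)"
    and "E_tight G \<nu> \<subseteq> E'" and "E' \<subseteq> S_set G \<alpha> \<sigma> \<nu>"
    and "\<forall>v. \<exists>v'. (v, v') \<in> E'"
  shows "\<exists>\<nu>'' \<sigma>'. neighbouring G \<nu> \<nu>'' \<and> joint_strategy G \<sigma>'
           \<and> f' G \<alpha> \<sigma>' \<nu>'' < f' G \<alpha> \<sigma> \<nu> \<and> better G \<alpha> \<sigma>' \<sigma>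
           \<and> (\<forall>v. (v, \<sigma>' v) \<in> E')"
proof -
  have sol: "solves_H G \<nu>" using assms(6) by (simp add: minimises_def)
  have off_nonneg: "offset G x e \<ge> 0" if "solves_H G x" "e \<in> edges G" for x e
    using that by (auto simp: solves_H_def ineq_offset)
  have f_nonneg: "f' G \<alpha> \<tau> x \<ge> 0" if "joint_strategy G \<tau>" "solves_H G x" for \<tau> x
    unfolding f'_def offset'_def
  proof (rule sum_nonneg)
    fix v
    have "(v, \<tau> v) \<in> edges G" using that by (simp add: joint_strategy_def)
    then show "0 \<le> \<alpha> (v, \<tau> v) * offset G x (v, \<tau> v)"
      using assms(2) off_nonneg[OF that(2)] by (simp add: less_imp_le)
  qed
  have E'sub: "E' \<subseteq> edges G" using assms(10) by (auto simp: S_set_def)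
  have db: "\<forall>e\<in>E'. 0 \<le> disc G e \<and> disc G e < 1" using assms(1) E'sub by (auto simp: is_dpg_def)
  obtain \<sigma>' z where eq: "\<And>v. (v, \<sigma>' v) \<in> E' \<and> offset G z (v, \<sigma>' v) = 0"
    and zpos: "\<And>e. e \<in> E' \<Longrightarrow> offset G z e \<ge> 0"
    using equilibrium[OF db assms(11)] by blast
  have js: "joint_strategy G \<sigma>'" using E'sub eq by (auto simp: joint_strategy_def)
  have same: "f' G \<alpha> \<sigma>' \<nu> = f' G \<alpha> \<sigma> \<nu>"
    unfolding f'_def
  proof (rule sum.cong)
    fix v
    have "(v, \<sigma>' v) \<in> S_set G \<alpha> \<sigma> \<nu>" using eq assms(10) by blast
    then show "offset' G \<alpha> \<nu> (v, \<sigma>' v) = offset' G \<alpha> \<nu> (v, \<sigma> v)" by (simp add: S_set_def)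
  qed simp
  have Cpos: "f' G \<alpha> \<sigma> \<nu> > 0" using f_nonneg[OF assms(4) sol] assms(7) by linarith
  have fz: "f' G \<alpha> \<sigma>' z = 0" unfolding f'_def offset'_def using eq by simp
  have not_min: "\<not> minimises G \<alpha> \<sigma>' \<nu>"
  proof
    assume mini: "minimises G \<alpha> \<sigma>' \<nu>"
    define P where "P = {e \<in> edges G. offset G \<nu> e > 0}"
    define m where "m = Min (insert 1 (offset G \<nu> ` P))"
    have m_in: "m \<in> insert 1 (offset G \<nu> ` P)" unfolding m_def by (intro Min_in) auto
    have m0: "m > 0" using m_in by (auto simp: P_def)
    have mle: "m \<le> offset G \<nu> e" if "e \<in> P" for e
      unfolding m_def using that by (intro Min_le) auto
    define K where "K = (\<Sum>e\<in>edges G. \<bar>offset G z e\<bar>)"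
    have Kge: "\<bar>offset G z e\<bar> \<le> K" if "e \<in> edges G" for e
      unfolding K_def using that by (intro member_le_sum) auto
    have K0: "K \<ge> 0" unfolding K_def by (simp add: sum_nonneg)
    define t where "t = m / (m + K)"
    have t0: "t > 0" using m0 K0 by (simp add: t_def)
    have t1: "t \<le> 1" using m0 K0 by (simp add: t_def)
    have key: "(1 - t) * m - t * K = 0" using m0 K0 by (simp add: t_def field_simps)
    define y where "y = (\<lambda>u. (1-t) * \<nu> u + t * z u)"
    have soly: "solves_H G y"
      unfolding solves_H_def ineq_offset
    proof
      fix e assume e: "e \<in> edges G"
      have oy: "offset G y e = (1-t) * offset G \<nu> e + t * offset G z e"
        unfolding y_def by (rule offset_affine)
      show "offset G y e \<ge> 0"
      proof (cases "offset G \<nu> e > 0")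
        case True
        then have "e \<in> P" using e by (simp add: P_def)
        then have "(1-t) * m \<le> (1-t) * offset G \<nu> e" using mle t1 by (intro mult_left_mono) auto
        moreover have "- K \<le> offset G z e" using Kge[OF e] by linarith
        then have "t * (- K) \<le> t * offset G z e" using t0 by (intro mult_left_mono) auto
        ultimately show ?thesis using oy key by linarith
      next
        case False
        then have "offset G \<nu> e = 0" using off_nonneg[OF sol e] by linarith
        then have "e \<in> E'" using assms(9) e by (auto simp: E_tight_def)
        then have "offset G z e \<ge> 0" by (rule zpos)
        then show ?thesis using oy \<open>offset G \<nu> e = 0\<close> t0 by simp
      qed
    qed
    have "f' G \<alpha> \<sigma>' y = (1-t) * f' G \<alpha> \<sigma>' \<nu>" unfolding y_def f'_affine fz by simp
    also have "\<dots> < f' G \<alpha> \<sigma>' \<nu>" using t0 Cpos same by (simp add: algebra_simps)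
    finally show False using mini soly by (auto simp: minimises_def)
  qed
  obtain \<nu>'' where nb: "neighbouring G \<nu> \<nu>''" and lt: "f' G \<alpha> \<sigma>' \<nu>'' < f' G \<alpha> \<sigma>' \<nu>"
    using assms(3) js assms(5) not_min unfolding improving_def by blast
  have sol'': "solves_H G \<nu>''" using nb by (auto simp: neighbouring_def basis_val_def)
  have bdd: "bdd_below {f' G \<alpha> \<sigma>' x | x. solves_H G x}"
    using f_nonneg[OF js] by (intro bdd_belowI[of _ 0]) auto
  have "min_f' G \<alpha> \<sigma>' \<le> f' G \<alpha> \<sigma>' \<nu>''"
    unfolding min_f'_def using sol'' bdd by (intro cInf_lower) auto
  moreover have "min_f' G \<alpha> \<sigma> = f' G \<alpha> \<sigma> \<nu>"
    unfolding min_f'_def using assms(6) by (intro cInf_eq_minimum) (auto simp: minimises_def)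
  ultimately have "better G \<alpha> \<sigma>' \<sigma>" using lt same by (simp add: better_def)
  then show ?thesis using nb js lt same eq by auto
qed

end
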